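(* For generic values of the parameters $u,v\in\mathbb{C}$ (outside a proper analytic subset of parameter space), each of the six matrices $h^{cl}_l,\ h^{cl}_r,\ h^{q}_l,\ h^{q}_r,\ M^{cl}(v),\ M^{q}(v)$ has exactly two distinct eigenvalues. For each of these matrices, the Jordan canonical form consists of exactly two Jordan blocks, each of size $N$. The two eigenvalues are the two distinct diagonal values of the matrix: - $0$ and $1$ for the four matrices $h$; - $-\mathrm{i}\coth(u-v)$ and $\mathrm{i}\tanh(v)$ for $M^{cl}(v)$; - $-\mathrm{i}\tanh(u-v)$ and $\mathrm{i}\coth(v)$ for $M^{q}(v)$.
   Context: All matrices are $2N\times 2N$ complex matrices, indexed by $1,\dots,2N$. Entries not listed are zero, and only index pairs lying in $\{1,\dots,2N\}^2$ are meant. Here $\mathrm{i}$ is the imaginary unit, $s=1/\cosh(u)$, $\lambda_{cl}(v)=\tanh(v)\coth(u-v)$ and $\lambda_q(v)=\tanh(u-v)\coth(v)$. In all formulas $1\le i\le N$, $1\le j\le 2N$ and $k\ge 1$. The matrix $M^{cl}(v)$ is lower triangular, with entries - $M^{cl}_{2i-1,2i-1}=-\mathrm{i}\coth(u-v)$ and $M^{cl}_{2i,2i}=\mathrm{i}\tanh(v)$; - $M^{cl}_{2i-1+2k,\,2i-1}=-\mathrm{i}\,\lambda_{cl}^{k-1}/(\coth(v)\sinh^2(u-v))$; - $M^{cl}_{2i+2k,\,2i}=-\mathrm{i}\,\lambda_{cl}^{k-1}/(\tanh(u-v)\cosh^2(v))$; - $M^{cl}_{j+2k-1,\,j}=-\mathrm{i}\,\lambda_{cl}^{k-1}/(\cosh(v)\sinh(u-v))$.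 The matrix $M^{q}(v)$ is upper triangular, with entries - $M^{q}_{2i-1,2i-1}=-\mathrm{i}\tanh(u-v)$ and $M^{q}_{2i,2i}=\mathrm{i}\coth(v)$; - $M^{q}_{2i-1,\,2i-1+2k}=\mathrm{i}\,\lambda_q^{k-1}/(\tanh(v)\cosh^2(u-v))$; - $M^{q}_{2i,\,2i+2k}=\mathrm{i}\,\lambda_q^{k-1}/(\coth(u-v)\sinh^2(v))$; - $M^{q}_{j,\,j+2k-1}=\mathrm{i}\,\lambda_q^{k-1}/(\sinh(v)\cosh(u-v))$. The local matrices have entries (with $1\le j\le 2N-1$ wherever $j$ appears): - $h^{cl}_l$: $(h^{cl}_l)_{2i,2i}=1$ for $1\le i\le N$; $(h^{cl}_l)_{j+1,j}=-s$; $(h^{cl}_l)_{2i+1,2i-1}=1$ for $1\le i\le N-1$. - $h^{q}_l$: $(h^{q}_l)_{2i,2i}=1$; $(h^{q}_l)_{j,j+1}=s$; $(h^{q}_l)_{2i-1,2i+1}=1$ for $1\le i\le N-1$. - $h^{cl}_r$: $(h^{cl}_r)_{2i-1,2i-1}=1$; $(h^{cl}_r)_{j+1,j}=s$; $(h^{cl}_r)_{2i+2,2i}=1$ for $1\le i\le N-1$. - $h^{q}_r$: $(h^{q}_r)_{2i-1,2i-1}=1$; $(h^{q}_r)_{j,j+1}=-s$; $(h^{q}_r)_{2i,2i+2}=1$ for $1\le i\le N-1$. *)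

theory Defs
  imports "HOL-Analysis.Complex_Analysis_Basics" "Jordan_Normal_Form.Jordan_Normal_Form"
begin

text \<open>All matrices below are 2N x 2N; entries are given with the paper's 1-based
  indices a, b in {1..2N}; the Isabelle matrix (0-based) entry (r,c) is the paper's entry
  (r+1, c+1).\<close>

definition coth :: "complex \<Rightarrow> complex" where
  "coth x = cosh x / sinh x"

definition s_par :: "complex \<Rightarrow> complex" where
  "s_par u = 1 / cosh u"

definition lam_cl :: "complex \<Rightarrow> complex \<Rightarrow> complex" where
  "lam_cl u v = tanh v * coth (u - v)"

definition lam_q :: "complex \<Rightarrow> complex \<Rightarrow> complex" where
  "lam_q u v = tanh (u - v) * coth v"

definition mat1 :: "nat \<Rightarrow> (nat \<Rightarrow> nat \<Rightarrow> complex) \<Rightarrow> complex mat" where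
  "mat1 N f = mat (2*N) (2*N) (\<lambda>(r,c). f (r+1) (c+1))"

definition Mcl_entry :: "complex \<Rightarrow> complex \<Rightarrow> nat \<Rightarrow> nat \<Rightarrow> complex" where
  "Mcl_entry u v a b =
    (if a = b then (if odd a then - \<i> * coth (u - v) else \<i> * tanh v)
     else if b < a \<and> even (a - b) then
       (let k = (a - b) div 2 in
         if odd b then - \<i> * lam_cl u v ^ (k - 1) / (coth v * sinh (u - v) ^ 2)
         else - \<i> * lam_cl u v ^ (k - 1) / (tanh (u - v) * cosh v ^ 2))
     else if b < a \<and> odd (a - b) then
       (let k = (a - b + 1) div 2 in
         - \<i> * lam_cl u v ^ (k - 1) / (cosh v * sinh (u - v)))
     else 0)"

definition Mcl :: "nat \<Rightarrow> complex \<Rightarrow> complex \<Rightarrow> complex mat" where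
  "Mcl N u v = mat1 N (Mcl_entry u v)"

definition Mq_entry :: "complex \<Rightarrow> complex \<Rightarrow> nat \<Rightarrow> nat \<Rightarrow> complex" where
  "Mq_entry u v a b =
    (if a = b then (if odd a then - \<i> * tanh (u - v) else \<i> * coth v)
     else if a < b \<and> even (b - a) then
       (let k = (b - a) div 2 in
         if odd a then \<i> * lam_q u v ^ (k - 1) / (tanh v * cosh (u - v) ^ 2)
         else \<i> * lam_q u v ^ (k - 1) / (coth (u - v) * sinh v ^ 2))
     else if a < b \<and> odd (b - a) then
       (let k = (b - a + 1) div 2 in
         \<i> * lam_q u v ^ (k - 1) / (sinh v * cosh (u - v)))
     else 0)"

definition Mq :: "nat \<Rightarrow> complex \<Rightarrow> complex \<Rightarrow> complex mat" where
  "Mq N u v = mat1 N (Mq_entry u v)"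

definition hcl_l :: "nat \<Rightarrow> complex \<Rightarrow> complex mat" where
  "hcl_l N u = mat1 N (\<lambda>a b.
     if a = b \<and> even a then 1
     else if a = b + 1 then - s_par u
     else if a = b + 2 \<and> odd b then 1 else 0)"

definition hq_l :: "nat \<Rightarrow> complex \<Rightarrow> complex mat" where
  "hq_l N u = mat1 N (\<lambda>a b.
     if a = b \<and> even a then 1
     else if b = a + 1 then s_par u
     else if b = a + 2 \<and> odd a then 1 else 0)"

definition hcl_r :: "nat \<Rightarrow> complex \<Rightarrow> complex mat" where
  "hcl_r N u = mat1 N (\<lambda>a b.
     if a = b \<and> odd a then 1
     else if a = b + 1 then s_par u
     else if a = b + 2 \<and> even b then 1 else 0)"

definition hq_r :: "nat \<Rightarrow> complex \<Rightarrow> complex mat" where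
  "hq_r N u = mat1 N (\<lambda>a b.
     if a = b \<and> odd a then 1
     else if b = a + 1 then - s_par u
     else if b = a + 2 \<and> even a then 1 else 0)"

definition two_blocks :: "nat \<Rightarrow> complex mat \<Rightarrow> complex \<Rightarrow> complex \<Rightarrow> bool" where
  "two_blocks N A d1 d2 \<longleftrightarrow>
     d1 \<noteq> d2 \<and> {e. eigenvalue A e} = {d1, d2} \<and> jordan_nf A [(N, d1), (N, d2)]"

end

theory Submission
  imports Defs "Jordan_Normal_Form.Jordan_Normal_Form_Uniqueness" "Jordan_Normal_Form.Jordan_Normal_Form_Existence"
begin
lemma kernel_dim_le1:
  fixes C :: "complex mat"
  assumes C: "C \<in> carrier_mat n n" and p: "p < n"
  and det: "\<And>v. v \<in> carrier_vec n \<Longrightarrow> C *\<^sub>v v = 0\<^sub>v n \<Longrightarrow> v $ p = 0 \<Longrightarrow> v = 0\<^sub>v n"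
  shows "kernel_dim C \<le> 1"
proof -
  interpret K: kernel n n C by (unfold_locales, rule C)
  obtain B where fin: "finite B" and bas: "K.basis B" using kernel_basis_exists[OF C] by auto
  have dim: "kernel_dim C = card B" using K.Ker.dim_basis[OF fin bas] by simp
  have Bk: "B \<subseteq> mat_kernel C" and li: "K.lin_indpt B" using bas unfolding K.Ker.basis_def by auto
  show ?thesis
  proof (rule ccontr)
    assume "\<not> ?thesis"
    hence "card B \<ge> 2" using dim by auto
    then obtain b1 b2 where b: "b1 \<in> B" "b2 \<in> B" "b1 \<noteq> b2"
    proof -
      from \<open>card B \<ge> 2\<close> have "B \<noteq> {}" by auto
      then obtain b1 where b1: "b1 \<in> B" by auto
      have "card (B - {b1}) \<ge> 1" using \<open>card B \<ge> 2\<close> b1 fin by (simp add: card_Diff_singleton)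
      hence "B - {b1} \<noteq> {}" by (metis card.empty not_one_le_zero)
      then obtain b2 where "b2 \<in> B - {b1}" by auto
      thus ?thesis using b1 that by auto
    qed
    have bk: "b1 \<in> mat_kernel C" "b2 \<in> mat_kernel C" using b Bk by auto
    have bc: "b1 \<in> carrier_vec n" "b2 \<in> carrier_vec n" "C *\<^sub>v b1 = 0\<^sub>v n" "C *\<^sub>v b2 = 0\<^sub>v n"
      using bk mat_kernelD[OF C] by auto
    define c1 where "c1 = (if b1 $ p = 0 then 1 else b2 $ p)"
    define c2 where "c2 = (if b1 $ p = 0 then 0 else - (b1 $ p))"
    define a where "a = (\<lambda>x. if x = b1 then c1 else c2)"
    define w where "w = c1 \<cdot>\<^sub>v b1 + c2 \<cdot>\<^sub>v b2"
    have wc: "w \<in> carrier_vec n" using bc unfolding w_def by auto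
    have "C *\<^sub>v w = c1 \<cdot>\<^sub>v (C *\<^sub>v b1) + c2 \<cdot>\<^sub>v (C *\<^sub>v b2)"
      unfolding w_def using bc C
      by (simp add: mult_add_distrib_mat_vec mult_mat_vec)
    hence Cw: "C *\<^sub>v w = 0\<^sub>v n" using bc by auto
    have "w $ p = 0" unfolding w_def c1_def c2_def using bc p by auto
    hence w0: "w = 0\<^sub>v n" using det[OF wc Cw] by auto
    have lc: "K.lincomb a {b1, b2} = 0\<^sub>v n"
    proof (rule eq_vecI)
      fix i assume i: "i < dim_vec (0\<^sub>v n :: complex vec)"
      hence i': "i < n" by auto
      have "K.lincomb a {b1, b2} $ i = sum (\<lambda>x. a x * x $ i) {b1,b2}"
        by (rule K.lincomb_index[OF i'], insert bk, auto)
      also have "\<dots> = a b1 * b1 $ i + a b2 * b2 $ i" using b(3) by simp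
      also have "\<dots> = w $ i" unfolding w_def a_def using bc i' b(3) by auto
      finally show "K.lincomb a {b1, b2} $ i = 0\<^sub>v n $ i" using w0 i' by auto
    next
      show "dim_vec (K.lincomb a {b1, b2}) = dim_vec (0\<^sub>v n :: complex vec)"
      proof -
        have "K.lincomb a {b1, b2} \<in> mat_kernel C"
          by (rule K.Ker.lincomb_closed, insert bk, auto)
        thus ?thesis using mat_kernel[OF C] by auto
      qed
    qed
    have "K.lin_dep B"
    proof (cases "b1 $ p = 0")
      case True
      show ?thesis
        by (rule K.Ker.lin_dep_crit[of "{b1,b2}" B a b1], insert b lc True, auto simp: a_def c1_def)
    next
      case False
      show ?thesis
        by (rule K.Ker.lin_dep_crit[of "{b1,b2}" B a b2], insert b lc False, auto simp: a_def c2_def)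
    qed
    with li show False by auto
  qed
qed

lemma swap_blocks_similar:
  fixes X Y :: "'a :: comm_ring_1 mat"
  assumes X: "X \<in> carrier_mat n n" and Y: "Y \<in> carrier_mat n n"
  shows "similar_mat (four_block_mat X (0\<^sub>m n n) (0\<^sub>m n n) Y) (four_block_mat Y (0\<^sub>m n n) (0\<^sub>m n n) X)"
proof -
  define P :: "'a mat" where "P = four_block_mat (0\<^sub>m n n) (1\<^sub>m n) (1\<^sub>m n) (0\<^sub>m n n)"
  have Pc: "P \<in> carrier_mat (n+n) (n+n)" unfolding P_def by auto
  have PP: "P * P = 1\<^sub>m (n+n)" unfolding P_def
    by (subst mult_four_block_mat, auto intro!: eq_matI)
  have "P * four_block_mat Y (0\<^sub>m n n) (0\<^sub>m n n) X = four_block_mat (0\<^sub>m n n) X Y (0\<^sub>m n n)"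
    unfolding P_def using X Y by (subst mult_four_block_mat, auto)
  hence "P * four_block_mat Y (0\<^sub>m n n) (0\<^sub>m n n) X * P = four_block_mat (0\<^sub>m n n) X Y (0\<^sub>m n n) * P"
    by simp
  also have "\<dots> = four_block_mat X (0\<^sub>m n n) (0\<^sub>m n n) Y"
    unfolding P_def using X Y by (subst mult_four_block_mat, auto)
  finally have eq: "four_block_mat X (0\<^sub>m n n) (0\<^sub>m n n) Y = P * four_block_mat Y (0\<^sub>m n n) (0\<^sub>m n n) X * P" by simp
  have "similar_mat_wit (four_block_mat X (0\<^sub>m n n) (0\<^sub>m n n) Y) (four_block_mat Y (0\<^sub>m n n) (0\<^sub>m n n) X) P P"
    unfolding similar_mat_wit_def Let_def using X Y Pc PP eq by auto
  thus ?thesis unfolding similar_mat_def by blast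
qed

lemma jordan_matrix_single: "jordan_matrix [(n,a)] = jordan_block n a"
  by (rule eq_matI, auto simp: jordan_matrix_def)

lemma jordan_matrix_two: "jordan_matrix [(n,a),(n,b)] =
  four_block_mat (jordan_block n a) (0\<^sub>m n n) (0\<^sub>m n n) (jordan_block n b)"
  unfolding jordan_matrix_Cons[of n a] by (simp add: jordan_matrix_single)

lemma jordan_nf_swap:
  fixes A :: "complex mat"
  assumes "jordan_nf A [(n,b),(n,a)]"
  shows "jordan_nf A [(n,a),(n,b)]"
proof -
  have "similar_mat (jordan_matrix [(n,b),(n,a)]) (jordan_matrix [(n,a),(n,b)])"
    unfolding jordan_matrix_two by (rule swap_blocks_similar, auto)
  with assms show ?thesis unfolding jordan_nf_def using similar_mat_trans by auto
qed

lemma sum_min1: "(\<forall>x\<in>set xs. x \<ge> (1::nat)) \<Longrightarrow> sum_list (map (min 1) xs) = length xs"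
  by (induct xs, auto)

lemma two_blocks_crit:
  fixes A :: "complex mat"
  assumes A: "A \<in> carrier_mat (2*N) (2*N)" and N: "N \<ge> 1" and d: "d1 \<noteq> d2"
  and cp: "char_poly A = [:-d1,1:]^N * [:-d2,1:]^N"
  and k1: "kernel_dim (char_matrix A d1) \<le> 1" and k2: "kernel_dim (char_matrix A d2) \<le> 1"
  shows "two_blocks N A d1 d2"
proof -
  have eig: "{e. eigenvalue A e} = {d1, d2}"
  proof -
    have "eigenvalue A e \<longleftrightarrow> e = d1 \<or> e = d2" for e
      unfolding eigenvalue_root_char_poly[OF A] cp using N by (auto simp: poly_power)
    thus ?thesis by auto
  qed
  from char_poly_factorized[OF A] obtain as where "char_poly A = (\<Prod> a \<leftarrow> as. [:- a, 1:])" by auto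
  from jordan_nf_exists[OF A this] obtain n_as where jnf: "jordan_nf A n_as" by auto
  have pos: "\<forall>x\<in>set n_as. fst x \<ge> 1"
  proof
    fix x assume "x \<in> set n_as"
    moreover have "0 \<notin> fst ` set n_as" using jnf unfolding jordan_nf_def by auto
    ultimately have "fst x \<noteq> 0" by force
    thus "fst x \<ge> 1" by simp
  qed
  have nz: "[:-d1,1:]^N * [:-d2,1:]^N \<noteq> (0 :: complex poly)" by auto
  have ord: "Polynomial.order e (char_poly A) = (if e = d1 then N else 0) + (if e = d2 then N else 0)" for e
    unfolding cp order_mult[OF nz] using order_linear_power[of e "-d1" N] order_linear_power[of e "-d2" N]
    by auto
  define L where "L = (\<lambda>e. filter (\<lambda>na. snd na = e) n_as)"
  have sumL: "sum_list (map fst (L e)) = (if e = d1 then N else 0) + (if e = d2 then N else 0)" for e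
    using jordan_nf_order[OF jnf, of e] ord[of e] unfolding L_def by auto
  have lenL: "length (L e) \<le> 1" if "kernel_dim (char_matrix A e) \<le> 1" for e
  proof -
    have "dim_gen_eigenspace A e 1 = kernel_dim (char_matrix A e)"
      unfolding dim_gen_eigenspace_def using A by simp
    also have "dim_gen_eigenspace A e 1 = sum_list (map (min 1) (map fst (L e)))"
      unfolding dim_gen_eigenspace[OF jnf] L_def
      by (rule arg_cong[where f = "\<lambda>xs. sum_list (map (min 1) (map fst xs))"], 
          rule filter_cong, auto)
    also have "\<dots> = length (L e)" using pos by (subst sum_min1, auto simp: L_def)
    finally show ?thesis using that by simp
  qed
  have single: "L e = [(N, e)]" if "e = d1 \<or> e = d2" "kernel_dim (char_matrix A e) \<le> 1" for e
  proof -
    have s: "sum_list (map fst (L e)) = N" using sumL[of e] that d by auto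
    have l: "length (L e) \<le> 1" using lenL that by auto
    have "L e \<noteq> []" using s N by auto
    with l obtain z where z: "L e = [z]" by (cases "L e"; cases "tl (L e)"; auto)
    have "z \<in> set (L e)" using z by simp
    hence "snd z = e" unfolding L_def by simp
    with s z show ?thesis by (cases z, auto)
  qed
  have L1: "L d1 = [(N,d1)]" using single[of d1] k1 by auto
  have L2: "L d2 = [(N,d2)]" using single[of d2] k2 by auto
  have inset: "snd x = d1 \<or> snd x = d2" if "x \<in> set n_as" for x
  proof (rule ccontr)
    assume "\<not> ?thesis"
    hence "x \<in> set (L (snd x))" using that unfolding L_def by auto
    hence "fst x \<le> sum_list (map fst (L (snd x)))" by (simp add: member_le_sum_list)
    with sumL[of "snd x"] pos that \<open>\<not> ?thesis\<close> show False by auto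
  qed
  have "length n_as = length (L d1) + length (filter (\<lambda>na. \<not> snd na = d1) n_as)"
    unfolding L_def by (rule sum_length_filter_compl[symmetric])
  also have "filter (\<lambda>na. \<not> snd na = d1) n_as = L d2" unfolding L_def
    by (rule filter_cong, insert inset d, auto)
  finally have "length n_as = 2" using L1 L2 by simp
  then obtain x y where xy: "n_as = [x,y]"
    by (cases n_as; cases "tl n_as"; cases "tl (tl n_as)"; auto)
  have "n_as = [(N,d1),(N,d2)] \<or> n_as = [(N,d2),(N,d1)]"
    using L1 L2 d inset unfolding xy L_def by (cases x; cases y; auto split: if_splits)
  hence jnf2: "jordan_nf A [(N,d1),(N,d2)]"
    using jnf jordan_nf_swap by auto
  show ?thesis unfolding two_blocks_def using d eig jnf2 by auto
qed

definition lowfam :: "nat \<Rightarrow> (nat \<Rightarrow> nat \<Rightarrow> complex) \<Rightarrow> (nat \<Rightarrow> nat \<Rightarrow> complex) \<Rightarrow> complex \<Rightarrow> complex mat" where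
  "lowfam N E B l = mat (2*N) (2*N) (\<lambda>(a,b). if a div 2 = b div 2 then E (a mod 2) (b mod 2)
     else if b div 2 < a div 2 then l ^ (a div 2 - b div 2 - 1) * B (a mod 2) (b mod 2) else 0)"

definition upfam :: "nat \<Rightarrow> (nat \<Rightarrow> nat \<Rightarrow> complex) \<Rightarrow> (nat \<Rightarrow> nat \<Rightarrow> complex) \<Rightarrow> complex \<Rightarrow> complex mat" where
  "upfam N E B l = mat (2*N) (2*N) (\<lambda>(a,b). if a div 2 = b div 2 then E (a mod 2) (b mod 2)
     else if a div 2 < b div 2 then l ^ (b div 2 - a div 2 - 1) * B (a mod 2) (b mod 2) else 0)"

lemma sum_split2: "(\<Sum>b<2*(N::nat). (g b :: 'a :: comm_monoid_add)) = (\<Sum>J<N. g (2*J) + g (2*J+1))"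
  by (induct N, auto simp: add.assoc)

lemma divmod_simps[simp]: "Suc (x*2) mod 2 = 1" "Suc (x*2) div 2 = x" "(x*2) mod 2 = 0" "(x*2) div 2 = (x::nat)"
  "Suc (2*x) mod 2 = 1" "Suc (2*x) div 2 = x" "(2*x) mod 2 = 0" "(2*x) div 2 = (x::nat)"
  by presburger+

lemma sum_pick_low:
  fixes I N :: nat
  assumes "I < N"
  shows "(\<Sum>J<N. if J = I then X else if J < I then Y J else (0::complex)) = X + (\<Sum>J<I. Y J)"
proof -
  have "(\<Sum>J<N. if J = I then X else if J < I then Y J else (0::complex))
     = (\<Sum>J<N. (if J = I then X else 0) + (if J < I then Y J else 0))"
    by (rule sum.cong) auto
  also have "\<dots> = X + (\<Sum>J\<in>{..<N} \<inter> {J. J < I}. Y J)"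
    unfolding sum.distrib using assms by (simp add: sum.inter_restrict)
  also have "{..<N} \<inter> {J. J < I} = {..<I}" using assms by auto
  finally show ?thesis .
qed

lemma sum_pick_up:
  fixes I N :: nat
  assumes "I < N"
  shows "(\<Sum>J<N. if J = I then X else if I < J then Y J else (0::complex)) = X + (\<Sum>J\<in>{I<..<N}. Y J)"
proof -
  have "(\<Sum>J<N. if J = I then X else if I < J then Y J else (0::complex))
     = (\<Sum>J<N. (if J = I then X else 0) + (if I < J then Y J else 0))"
    by (rule sum.cong) auto
  also have "\<dots> = X + (\<Sum>J\<in>{..<N} \<inter> {J. I < J}. Y J)"
    unfolding sum.distrib using assms by (simp add: sum.inter_restrict)
  also have "{..<N} \<inter> {J. I < J} = {I<..<N}" using assms by auto
  finally show ?thesis .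
qed

lemma mult_vec_sum:
  fixes A :: "complex mat"
  assumes A: "A \<in> carrier_mat n n" and v: "v \<in> carrier_vec n" and i: "i < n"
  shows "(A *\<^sub>v v) $ i = (\<Sum>b<n. A $$ (i,b) * v $ b)"
  using A v i by (auto simp: scalar_prod_def row_def lessThan_atLeast0)

lemma lowfam_row:
  assumes v: "v \<in> carrier_vec (2*N)" and I: "I < N" and r: "r < 2"
  shows "(lowfam N E B l *\<^sub>v v) $ (2*I+r) = E r 0 * v $ (2*I) + E r 1 * v $ (2*I+1)
     + (\<Sum>J<I. l ^ (I - J - 1) * (B r 0 * v $ (2*J) + B r 1 * v $ (2*J+1)))"
proof -
  have A: "lowfam N E B l \<in> carrier_mat (2*N) (2*N)" unfolding lowfam_def by auto
  have i: "2*I+r < 2*N" using I r by auto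
  have d: "(2*I+r) div 2 = I" "(2*I+r) mod 2 = r" using r by auto
  have "(lowfam N E B l *\<^sub>v v) $ (2*I+r) = (\<Sum>b<2*N. lowfam N E B l $$ (2*I+r,b) * v $ b)"
    by (rule mult_vec_sum[OF A v i])
  also have "\<dots> = (\<Sum>J<N. if J = I then E r 0 * v $ (2*I) + E r 1 * v $ (2*I+1)
      else if J < I then l ^ (I - J - 1) * (B r 0 * v $ (2*J) + B r 1 * v $ (2*J+1)) else 0)"
    unfolding sum_split2
    by (rule sum.cong[OF refl], insert i d, auto simp: lowfam_def algebra_simps)
  also have "\<dots> = E r 0 * v $ (2*I) + E r 1 * v $ (2*I+1)
     + (\<Sum>J<I. l ^ (I - J - 1) * (B r 0 * v $ (2*J) + B r 1 * v $ (2*J+1)))" by (rule sum_pick_low[OF I])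
  finally show ?thesis .
qed

lemma upfam_row:
  assumes v: "v \<in> carrier_vec (2*N)" and I: "I < N" and r: "r < 2"
  shows "(upfam N E B l *\<^sub>v v) $ (2*I+r) = E r 0 * v $ (2*I) + E r 1 * v $ (2*I+1)
     + (\<Sum>J\<in>{I<..<N}. l ^ (J - I - 1) * (B r 0 * v $ (2*J) + B r 1 * v $ (2*J+1)))"
proof -
  have A: "upfam N E B l \<in> carrier_mat (2*N) (2*N)" unfolding upfam_def by auto
  have i: "2*I+r < 2*N" using I r by auto
  have d: "(2*I+r) div 2 = I" "(2*I+r) mod 2 = r" using r by auto
  have "(upfam N E B l *\<^sub>v v) $ (2*I+r) = (\<Sum>b<2*N. upfam N E B l $$ (2*I+r,b) * v $ b)"
    by (rule mult_vec_sum[OF A v i])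
  also have "\<dots> = (\<Sum>J<N. if J = I then E r 0 * v $ (2*I) + E r 1 * v $ (2*I+1)
      else if I < J then l ^ (J - I - 1) * (B r 0 * v $ (2*J) + B r 1 * v $ (2*J+1)) else 0)"
    unfolding sum_split2
    by (rule sum.cong[OF refl], insert i d, auto simp: upfam_def algebra_simps)
  also have "\<dots> = E r 0 * v $ (2*I) + E r 1 * v $ (2*I+1)
     + (\<Sum>J\<in>{I<..<N}. l ^ (J - I - 1) * (B r 0 * v $ (2*J) + B r 1 * v $ (2*J+1)))" by (rule sum_pick_up[OF I])
  finally show ?thesis .
qed

lemma char_matrix_mult_vec:
  fixes A :: "complex mat"
  assumes A: "A \<in> carrier_mat n n" and v: "v \<in> carrier_vec n" and i: "i < n"
  shows "(char_matrix A m *\<^sub>v v) $ i = (A *\<^sub>v v) $ i - m * v $ i"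
proof -
  have "char_matrix A m *\<^sub>v v = A *\<^sub>v v + ((-m) \<cdot>\<^sub>m 1\<^sub>m n) *\<^sub>v v"
    unfolding char_matrix_def using A v by (simp add: add_mult_distrib_mat_vec)
  thus ?thesis using A v i by simp
qed

lemma lin2:
  fixes a b c d x y :: complex
  assumes "a * x + b * y = 0" "c * x + d * y = 0" "a * d - b * c \<noteq> 0"
  shows "x = 0 \<and> y = 0"
proof -
  have "(a * d - b * c) * x = d * (a * x + b * y) - b * (c * x + d * y)" by (simp add: algebra_simps)
  hence x: "x = 0" using assms by simp
  have "(a * d - b * c) * y = a * (c * x + d * y) - c * (a * x + b * y)" by (simp add: algebra_simps)
  hence "y = 0" using assms by simp
  with x show ?thesis by simp
qed

lemma zero_from_xy:
  fixes v :: "complex vec"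
  assumes v: "v \<in> carrier_vec (2*N)" and z: "\<And>J. J < N \<Longrightarrow> v $ (2*J) = 0 \<and> v $ (2*J+1) = 0"
  shows "v = 0\<^sub>v (2*N)"
proof (rule eq_vecI)
  fix i assume "i < dim_vec (0\<^sub>v (2*N) :: complex vec)"
  hence i: "i < 2*N" by simp
  have J: "i div 2 < N" using i by auto
  have "i = 2 * (i div 2) \<or> i = 2 * (i div 2) + 1" by presburger
  thus "v $ i = 0\<^sub>v (2*N) $ i" using z[OF J] i by auto
qed (insert v, auto)

lemma kernel_eqs:
  fixes A :: "complex mat" and v :: "complex vec"
  assumes A: "A \<in> carrier_mat (2*N) (2*N)" and v: "v \<in> carrier_vec (2*N)"
  and ker: "char_matrix A m *\<^sub>v v = 0\<^sub>v (2*N)" and I: "I < N" and r: "r < 2"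
  shows "(A *\<^sub>v v) $ (2*I+r) - m * v $ (2*I+r) = 0"
proof -
  have i: "2*I+r < 2*N" using I r by auto
  show ?thesis using char_matrix_mult_vec[OF A v i, of m] ker i by simp
qed

lemma low_ker1:
  assumes E01: "E 0 1 = 0" and e11: "E 1 1 - E 0 0 \<noteq> 0"
  and det: "E 1 0 * B 0 1 - (E 1 1 - E 0 0) * B 0 0 \<noteq> 0" and N: "N \<ge> 1"
  shows "kernel_dim (char_matrix (lowfam N E B l) (E 0 0)) \<le> 1"
proof -
  let ?A = "lowfam N E B l"
  let ?m = "E 0 0"
  have A: "?A \<in> carrier_mat (2*N) (2*N)" unfolding lowfam_def by auto
  show ?thesis
  proof (rule kernel_dim_le1[of _ "2*N" "2*(N-1)"])
    show "char_matrix ?A ?m \<in> carrier_mat (2*N) (2*N)" using A by auto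
    show "2*(N-1) < 2*N" using N by auto
    fix v :: "complex vec"
    assume v: "v \<in> carrier_vec (2*N)" and ker: "char_matrix ?A ?m *\<^sub>v v = 0\<^sub>v (2*N)"
      and p: "v $ (2*(N-1)) = 0"
    define x where "x = (\<lambda>J. v $ (2*J))"
    define y where "y = (\<lambda>J. v $ (2*J+1))"
    define S where "S = (\<lambda>I r. \<Sum>J<I. l ^ (I - J - 1) * (B r 0 * x J + B r 1 * y J))"
    have K: "E r 0 * x I + E r 1 * y I + S I r - ?m * v $ (2*I+r) = 0" if "I < N" "r < 2" for I r
      using kernel_eqs[OF A v ker that] lowfam_row[OF v that, of E B l] unfolding x_def y_def S_def
      by simp
    have K0: "S I 0 = 0" if "I < N" for I using K[OF that, of 0] E01 by (simp add: x_def)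
    have K1: "E 1 0 * x I + (E 1 1 - ?m) * y I + S I 1 = 0" if "I < N" for I
      using K[OF that, of 1] by (simp add: y_def algebra_simps)
    have S0: "S I r = 0" if "\<And>J. J < I \<Longrightarrow> x J = 0 \<and> y J = 0" for I r
      unfolding S_def by (rule sum.neutral, insert that, auto)
    have SSuc: "S (Suc I) r = B r 0 * x I + B r 1 * y I" if "\<And>J. J < I \<Longrightarrow> x J = 0 \<and> y J = 0" for I r
      unfolding S_def using that by simp
    have low: "x I = 0 \<and> y I = 0" if "I < N - 1" for I
      using that
    proof (induct I rule: less_induct)
      case (less I)
      hence prev: "\<And>J. J < I \<Longrightarrow> x J = 0 \<and> y J = 0" by auto
      have e1: "E 1 0 * x I + (E 1 1 - ?m) * y I = 0" using K1[of I] S0[OF prev] less by auto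
      have e2: "B 0 0 * x I + B 0 1 * y I = 0" using K0[of "Suc I"] SSuc[OF prev] less by auto
      show ?case by (rule lin2[OF e1 e2], insert det, simp add: algebra_simps)
    qed
    have last: "x (N-1) = 0 \<and> y (N-1) = 0"
    proof -
      have "S (N-1) 1 = 0" using S0[of "N-1"] low by auto
      hence "E 1 0 * x (N-1) + (E 1 1 - ?m) * y (N-1) = 0" using K1[of "N-1"] N by auto
      moreover have "x (N-1) = 0" using p by (simp add: x_def)
      ultimately show ?thesis using e11 by simp
    qed
    show "v = 0\<^sub>v (2*N)"
    proof (rule zero_from_xy[OF v])
      fix J assume "J < N"
      hence "J < N - 1 \<or> J = N - 1" by auto
      thus "v $ (2*J) = 0 \<and> v $ (2*J+1) = 0" using low last unfolding x_def y_def by auto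
    qed
  qed
qed

lemma low_ker2:
  assumes E01: "E 0 1 = 0" and e00: "E 0 0 - E 1 1 \<noteq> 0"
  and det: "(E 0 0 - E 1 1) * B 1 1 - E 1 0 * B 0 1 \<noteq> 0" and N: "N \<ge> 1"
  shows "kernel_dim (char_matrix (lowfam N E B l) (E 1 1)) \<le> 1"
proof -
  let ?A = "lowfam N E B l"
  let ?m = "E 1 1"
  have A: "?A \<in> carrier_mat (2*N) (2*N)" unfolding lowfam_def by auto
  show ?thesis
  proof (rule kernel_dim_le1[of _ "2*N" "2*(N-1)+1"])
    show "char_matrix ?A ?m \<in> carrier_mat (2*N) (2*N)" using A by auto
    show "2*(N-1)+1 < 2*N" using N by auto
    fix v :: "complex vec"
    assume v: "v \<in> carrier_vec (2*N)" and ker: "char_matrix ?A ?m *\<^sub>v v = 0\<^sub>v (2*N)"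
      and p: "v $ (2*(N-1)+1) = 0"
    define x where "x = (\<lambda>J. v $ (2*J))"
    define y where "y = (\<lambda>J. v $ (2*J+1))"
    define S where "S = (\<lambda>I r. \<Sum>J<I. l ^ (I - J - 1) * (B r 0 * x J + B r 1 * y J))"
    have K: "E r 0 * x I + E r 1 * y I + S I r - ?m * v $ (2*I+r) = 0" if "I < N" "r < 2" for I r
      using kernel_eqs[OF A v ker that] lowfam_row[OF v that, of E B l] unfolding x_def y_def S_def
      by simp
    have K0: "(E 0 0 - ?m) * x I + S I 0 = 0" if "I < N" for I
      using K[OF that, of 0] E01 by (simp add: x_def algebra_simps)
    have K1: "E 1 0 * x I + S I 1 = 0" if "I < N" for I
      using K[OF that, of 1] by (simp add: y_def algebra_simps)
    have S0: "S I r = 0" if "\<And>J. J < I \<Longrightarrow> x J = 0 \<and> y J = 0" for I r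
      unfolding S_def by (rule sum.neutral, insert that, auto)
    have SSuc: "S (Suc I) r = B r 0 * x I + B r 1 * y I" if "\<And>J. J < I \<Longrightarrow> x J = 0 \<and> y J = 0" for I r
      unfolding S_def using that by simp
    have low: "x I = 0 \<and> y I = 0" if "I < N - 1" for I
      using that
    proof (induct I rule: less_induct)
      case (less I)
      hence prev: "\<And>J. J < I \<Longrightarrow> x J = 0 \<and> y J = 0" by auto
      have xI: "x I = 0" using K0[of I] S0[OF prev] less e00 by auto
      have e1: "(E 0 0 - ?m) * x (Suc I) + B 0 1 * y I = 0" using K0[of "Suc I"] SSuc[OF prev] less xI by auto
      have e2: "E 1 0 * x (Suc I) + B 1 1 * y I = 0" using K1[of "Suc I"] SSuc[OF prev] less xI by auto
      have "x (Suc I) = 0 \<and> y I = 0" by (rule lin2[OF e1 e2], insert det, simp add: algebra_simps)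
      with xI show ?case by simp
    qed
    have last: "x (N-1) = 0 \<and> y (N-1) = 0"
    proof -
      have "S (N-1) 0 = 0" using S0[of "N-1"] low by auto
      hence "(E 0 0 - ?m) * x (N-1) = 0" using K0[of "N-1"] N by auto
      moreover have "y (N-1) = 0" using p by (simp add: y_def)
      ultimately show ?thesis using e00 by simp
    qed
    show "v = 0\<^sub>v (2*N)"
    proof (rule zero_from_xy[OF v])
      fix J assume "J < N"
      hence "J < N - 1 \<or> J = N - 1" by auto
      thus "v $ (2*J) = 0 \<and> v $ (2*J+1) = 0" using low last unfolding x_def y_def by auto
    qed
  qed
qed

lemma up_ker1:
  assumes E10: "E 1 0 = 0" and e11: "E 1 1 - E 0 0 \<noteq> 0"
  and det: "(E 1 1 - E 0 0) * B 0 0 - E 0 1 * B 1 0 \<noteq> 0" and N: "N \<ge> 1"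
  shows "kernel_dim (char_matrix (upfam N E B l) (E 0 0)) \<le> 1"
proof -
  let ?A = "upfam N E B l"
  let ?m = "E 0 0"
  have A: "?A \<in> carrier_mat (2*N) (2*N)" unfolding upfam_def by auto
  show ?thesis
  proof (rule kernel_dim_le1[of _ "2*N" "0"])
    show "char_matrix ?A ?m \<in> carrier_mat (2*N) (2*N)" using A by auto
    show "0 < 2*N" using N by auto
    fix v :: "complex vec"
    assume v: "v \<in> carrier_vec (2*N)" and ker: "char_matrix ?A ?m *\<^sub>v v = 0\<^sub>v (2*N)"
      and p: "v $ 0 = 0"
    define x where "x = (\<lambda>J. v $ (2*J))"
    define y where "y = (\<lambda>J. v $ (2*J+1))"
    define U where "U = (\<lambda>I r. \<Sum>J\<in>{I<..<N}. l ^ (J - I - 1) * (B r 0 * x J + B r 1 * y J))"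
    have K: "E r 0 * x I + E r 1 * y I + U I r - ?m * v $ (2*I+r) = 0" if "I < N" "r < 2" for I r
      using kernel_eqs[OF A v ker that] upfam_row[OF v that, of E B l] unfolding x_def y_def U_def
      by simp
    have K0: "E 0 1 * y I + U I 0 = 0" if "I < N" for I
      using K[OF that, of 0] by (simp add: x_def algebra_simps)
    have K1: "(E 1 1 - ?m) * y I + U I 1 = 0" if "I < N" for I
      using K[OF that, of 1] E10 by (simp add: y_def algebra_simps)
    have U0: "U I r = 0" if "\<And>J. I < J \<Longrightarrow> J < N \<Longrightarrow> x J = 0 \<and> y J = 0" for I r
      unfolding U_def by (rule sum.neutral, insert that, auto)
    have USuc: "U I r = B r 0 * x (Suc I) + B r 1 * y (Suc I)"
      if "Suc I < N" "\<And>J. Suc I < J \<Longrightarrow> J < N \<Longrightarrow> x J = 0 \<and> y J = 0" for I r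
    proof -
      have "{I<..<N} = insert (Suc I) {Suc I<..<N}" using that(1) by auto
      hence "U I r = l ^ (Suc I - I - 1) * (B r 0 * x (Suc I) + B r 1 * y (Suc I))
         + (\<Sum>J\<in>{Suc I<..<N}. l ^ (J - I - 1) * (B r 0 * x J + B r 1 * y J))"
        unfolding U_def by simp
      moreover have "(\<Sum>J\<in>{Suc I<..<N}. l ^ (J - I - 1) * (B r 0 * x J + B r 1 * y J)) = 0"
        by (rule sum.neutral, insert that(2), auto)
      ultimately show ?thesis by simp
    qed
    have high: "x I = 0 \<and> y I = 0" if "1 \<le> I" "I < N" for I
      using that
    proof (induct "N - I" arbitrary: I rule: less_induct)
      case (less I)
      have nxt: "\<And>J. I < J \<Longrightarrow> J < N \<Longrightarrow> x J = 0 \<and> y J = 0"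
        using less.hyps less.prems by auto
      have yI: "y I = 0" using K1[of I] U0[OF nxt] less.prems e11 by auto
      obtain I' where I': "I = Suc I'" using less.prems by (cases I, auto)
      have e1: "B 0 0 * x I + E 0 1 * y I' = 0"
        using K0[of I'] USuc[of I' 0] nxt yI less.prems I' by (auto simp: algebra_simps)
      have e2: "B 1 0 * x I + (E 1 1 - ?m) * y I' = 0"
        using K1[of I'] USuc[of I' 1] nxt yI less.prems I' by (auto simp: algebra_simps)
      have "x I = 0 \<and> y I' = 0" by (rule lin2[OF e1 e2], insert det, simp add: algebra_simps)
      with yI show ?case by simp
    qed
    have first: "x 0 = 0 \<and> y 0 = 0"
    proof -
      have "U 0 1 = 0" using U0[of 0] high by auto
      hence "(E 1 1 - ?m) * y 0 = 0" using K1[of 0] N by auto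
      moreover have "x 0 = 0" using p by (simp add: x_def)
      ultimately show ?thesis using e11 by simp
    qed
    show "v = 0\<^sub>v (2*N)"
    proof (rule zero_from_xy[OF v])
      fix J assume "J < N"
      thus "v $ (2*J) = 0 \<and> v $ (2*J+1) = 0" using high[of J] first unfolding x_def y_def
        by (cases J, auto)
    qed
  qed
qed

lemma up_ker2:
  assumes E10: "E 1 0 = 0" and e00: "E 0 0 - E 1 1 \<noteq> 0"
  and det: "(E 0 0 - E 1 1) * B 1 1 - E 0 1 * B 1 0 \<noteq> 0" and N: "N \<ge> 1"
  shows "kernel_dim (char_matrix (upfam N E B l) (E 1 1)) \<le> 1"
proof -
  let ?A = "upfam N E B l"
  let ?m = "E 1 1"
  have A: "?A \<in> carrier_mat (2*N) (2*N)" unfolding upfam_def by auto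
  show ?thesis
  proof (rule kernel_dim_le1[of _ "2*N" "1"])
    show "char_matrix ?A ?m \<in> carrier_mat (2*N) (2*N)" using A by auto
    show "1 < 2*N" using N by auto
    fix v :: "complex vec"
    assume v: "v \<in> carrier_vec (2*N)" and ker: "char_matrix ?A ?m *\<^sub>v v = 0\<^sub>v (2*N)"
      and p: "v $ 1 = 0"
    define x where "x = (\<lambda>J. v $ (2*J))"
    define y where "y = (\<lambda>J. v $ (2*J+1))"
    define U where "U = (\<lambda>I r. \<Sum>J\<in>{I<..<N}. l ^ (J - I - 1) * (B r 0 * x J + B r 1 * y J))"
    have K: "E r 0 * x I + E r 1 * y I + U I r - ?m * v $ (2*I+r) = 0" if "I < N" "r < 2" for I r
      using kernel_eqs[OF A v ker that] upfam_row[OF v that, of E B l] unfolding x_def y_def U_def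
      by simp
    have K0: "(E 0 0 - ?m) * x I + E 0 1 * y I + U I 0 = 0" if "I < N" for I
      using K[OF that, of 0] by (simp add: x_def algebra_simps)
    have K1: "U I 1 = 0" if "I < N" for I
      using K[OF that, of 1] E10 by (simp add: y_def algebra_simps)
    have U0: "U I r = 0" if "\<And>J. I < J \<Longrightarrow> J < N \<Longrightarrow> x J = 0 \<and> y J = 0" for I r
      unfolding U_def by (rule sum.neutral, insert that, auto)
    have USuc: "U I r = B r 0 * x (Suc I) + B r 1 * y (Suc I)"
      if "Suc I < N" "\<And>J. Suc I < J \<Longrightarrow> J < N \<Longrightarrow> x J = 0 \<and> y J = 0" for I r
    proof -
      have "{I<..<N} = insert (Suc I) {Suc I<..<N}" using that(1) by auto
      hence "U I r = l ^ (Suc I - I - 1) * (B r 0 * x (Suc I) + B r 1 * y (Suc I))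
         + (\<Sum>J\<in>{Suc I<..<N}. l ^ (J - I - 1) * (B r 0 * x J + B r 1 * y J))"
        unfolding U_def by simp
      moreover have "(\<Sum>J\<in>{Suc I<..<N}. l ^ (J - I - 1) * (B r 0 * x J + B r 1 * y J)) = 0"
        by (rule sum.neutral, insert that(2), auto)
      ultimately show ?thesis by simp
    qed
    have high: "x I = 0 \<and> y I = 0" if "1 \<le> I" "I < N" for I
      using that
    proof (induct "N - I" arbitrary: I rule: less_induct)
      case (less I)
      have nxt: "\<And>J. I < J \<Longrightarrow> J < N \<Longrightarrow> x J = 0 \<and> y J = 0"
        using less.hyps less.prems by auto
      obtain I' where I': "I = Suc I'" using less.prems by (cases I, auto)
      have e1: "(E 0 0 - ?m) * x I + E 0 1 * y I = 0"
        using K0[of I] U0[OF nxt] less.prems by auto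
      have e2: "B 1 0 * x I + B 1 1 * y I = 0"
        using K1[of I'] USuc[of I' 1] nxt less.prems I' by auto
      show ?case by (rule lin2[OF e1 e2], insert det, simp add: algebra_simps)
    qed
    have first: "x 0 = 0 \<and> y 0 = 0"
    proof -
      have "U 0 0 = 0" using U0[of 0] high by auto
      moreover have "y 0 = 0" using p by (simp add: y_def)
      ultimately have "(E 0 0 - ?m) * x 0 = 0" using K0[of 0] N by auto
      thus ?thesis using e00 \<open>y 0 = 0\<close> by simp
    qed
    show "v = 0\<^sub>v (2*N)"
    proof (rule zero_from_xy[OF v])
      fix J assume "J < N"
      thus "v $ (2*J) = 0 \<and> v $ (2*J+1) = 0" using high[of J] first unfolding x_def y_def
        by (cases J, auto)
    qed
  qed
qed

lemma prod_alt: "prod_list (map (\<lambda>i. h (i mod 2)) [0..<2*N]) = (h 0 :: 'a :: comm_monoid_mult) ^ N * h 1 ^ N"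
proof (induct N)
  case (Suc N)
  have "[0..<2*Suc N] = [0..<2*N] @ [2*N, Suc (2*N)]" by (simp add: upt_Suc)
  hence "prod_list (map (\<lambda>i. h (i mod 2)) [0..<2*Suc N]) = prod_list (map (\<lambda>i. h (i mod 2)) [0..<2*N]) * (h 0 * h 1)"
    by (simp add: mult.assoc)
  also have "\<dots> = h 0 ^ Suc N * h 1 ^ Suc N" unfolding Suc by (simp add: algebra_simps)
  finally show ?case .
qed simp

lemma upfam_cp:
  assumes E10: "E 1 0 = 0"
  shows "char_poly (upfam N E B l) = [:-E 0 0,1:]^N * [:-E 1 1,1:]^N"
proof -
  let ?A = "upfam N E B l"
  have A: "?A \<in> carrier_mat (2*N) (2*N)" unfolding upfam_def by auto
  have ut: "upper_triangular ?A"
    unfolding upper_triangular_def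
  proof (intro allI impI)
    fix i j assume i: "i < dim_row ?A" and ji: "j < i"
    have "i div 2 = j div 2 \<Longrightarrow> i mod 2 = 1 \<and> j mod 2 = 0" using ji by presburger
    moreover have "j div 2 \<le> i div 2" using ji by (simp add: div_le_mono)
    ultimately show "?A $$ (i,j) = 0" using i ji E10 by (auto simp: upfam_def)
  qed
  have "char_poly ?A = (\<Prod> a \<leftarrow> diag_mat ?A. [:- a, 1:])" by (rule char_poly_upper_triangular[OF A ut])
  also have "diag_mat ?A = map (\<lambda>i. E (i mod 2) (i mod 2)) [0..<2*N]"
    unfolding diag_mat_def by (auto simp: upfam_def)
  also have "(\<Prod> a \<leftarrow> map (\<lambda>i. E (i mod 2) (i mod 2)) [0..<2*N]. [:- a, 1:]) = 
     prod_list (map (\<lambda>i. (\<lambda>k. [:- E k k, 1:]) (i mod 2)) [0..<2*N])"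
    by (simp add: o_def)
  also have "\<dots> = [:-E 0 0,1:]^N * [:-E 1 1,1:]^N" by (rule prod_alt)
  finally show ?thesis .
qed

lemma lowfam_cp:
  assumes E01: "E 0 1 = 0"
  shows "char_poly (lowfam N E B l) = [:-E 0 0,1:]^N * [:-E 1 1,1:]^N"
proof -
  let ?A = "lowfam N E B l"
  let ?T = "transpose_mat ?A"
  have A: "?A \<in> carrier_mat (2*N) (2*N)" unfolding lowfam_def by auto
  have T: "?T \<in> carrier_mat (2*N) (2*N)" using A by auto
  have ut: "upper_triangular ?T"
    unfolding upper_triangular_def
  proof (intro allI impI)
    fix i j assume i: "i < dim_row ?T" and ji: "j < i"
    have "i div 2 = j div 2 \<Longrightarrow> i mod 2 = 1 \<and> j mod 2 = 0" using ji by presburger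
    moreover have "j div 2 \<le> i div 2" using ji by (simp add: div_le_mono)
    ultimately show "?T $$ (i,j) = 0" using i ji E01 A by (auto simp: lowfam_def)
  qed
  have "char_poly ?A = char_poly ?T" using A by simp
  also have "\<dots> = (\<Prod> a \<leftarrow> diag_mat ?T. [:- a, 1:])" by (rule char_poly_upper_triangular[OF T ut])
  also have "diag_mat ?T = map (\<lambda>i. E (i mod 2) (i mod 2)) [0..<2*N]"
    unfolding diag_mat_def by (auto simp: lowfam_def)
  also have "(\<Prod> a \<leftarrow> map (\<lambda>i. E (i mod 2) (i mod 2)) [0..<2*N]. [:- a, 1:]) = 
     prod_list (map (\<lambda>i. (\<lambda>k. [:- E k k, 1:]) (i mod 2)) [0..<2*N])"
    by (simp add: o_def)
  also have "\<dots> = [:-E 0 0,1:]^N * [:-E 1 1,1:]^N" by (rule prod_alt)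
  finally show ?thesis .
qed

lemma lowfam_two_blocks:
  assumes E01: "E 0 1 = 0" and N: "N \<ge> 1" and d: "E 0 0 \<noteq> E 1 1"
  and det1: "E 1 0 * B 0 1 - (E 1 1 - E 0 0) * B 0 0 \<noteq> 0"
  and det2: "(E 0 0 - E 1 1) * B 1 1 - E 1 0 * B 0 1 \<noteq> 0"
  shows "two_blocks N (lowfam N E B l) (E 0 0) (E 1 1)"
  by (rule two_blocks_crit[OF _ N d lowfam_cp[where E=E and B=B and l=l and N=N, OF E01] low_ker1[where E=E and B=B and l=l and N=N, OF E01 _ det1 N] low_ker2[where E=E and B=B and l=l and N=N, OF E01 _ det2 N]],
      insert d, auto simp: lowfam_def)

lemma upfam_two_blocks:
  assumes E10: "E 1 0 = 0" and N: "N \<ge> 1" and d: "E 0 0 \<noteq> E 1 1"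
  and det1: "(E 1 1 - E 0 0) * B 0 0 - E 0 1 * B 1 0 \<noteq> 0"
  and det2: "(E 0 0 - E 1 1) * B 1 1 - E 0 1 * B 1 0 \<noteq> 0"
  shows "two_blocks N (upfam N E B l) (E 0 0) (E 1 1)"
  by (rule two_blocks_crit[OF _ N d upfam_cp[where E=E and B=B and l=l and N=N, OF E10] up_ker1[where E=E and B=B and l=l and N=N, OF E10 _ det1 N] up_ker2[where E=E and B=B and l=l and N=N, OF E10 _ det2 N]],
      insert d, auto simp: upfam_def)

lemma mat1_lowfam:
  assumes "\<And>I J r c. I < N \<Longrightarrow> J < N \<Longrightarrow> r < 2 \<Longrightarrow> c < 2 \<Longrightarrow>
     f (2*I+r+1) (2*J+c+1) = (if I = J then E r c else if J < I then l^(I-J-1) * B r c else 0)"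
  shows "mat1 N f = lowfam N E B l"
proof (rule eq_matI)
  fix i j assume i: "i < dim_row (lowfam N E B l)" and j: "j < dim_col (lowfam N E B l)"
  hence i': "i < 2*N" and j': "j < 2*N" by (auto simp: lowfam_def)
  have ei: "i = 2*(i div 2) + i mod 2" and ej: "j = 2*(j div 2) + j mod 2" by auto
  have "f (i+1) (j+1) = f (2*(i div 2) + i mod 2 + 1) (2*(j div 2) + j mod 2 + 1)" using ei ej by simp
  also have "\<dots> = (if i div 2 = j div 2 then E (i mod 2) (j mod 2) else if j div 2 < i div 2 then l^(i div 2 - j div 2 - 1) * B (i mod 2) (j mod 2) else 0)"
    by (rule assms, insert i' j', auto)
  finally show "mat1 N f $$ (i,j) = lowfam N E B l $$ (i,j)" using i' j'
    by (simp add: mat1_def lowfam_def)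
qed (auto simp: mat1_def lowfam_def)

lemma mat1_upfam:
  assumes "\<And>I J r c. I < N \<Longrightarrow> J < N \<Longrightarrow> r < 2 \<Longrightarrow> c < 2 \<Longrightarrow>
     f (2*I+r+1) (2*J+c+1) = (if I = J then E r c else if I < J then l^(J-I-1) * B r c else 0)"
  shows "mat1 N f = upfam N E B l"
proof (rule eq_matI)
  fix i j assume i: "i < dim_row (upfam N E B l)" and j: "j < dim_col (upfam N E B l)"
  hence i': "i < 2*N" and j': "j < 2*N" by (auto simp: upfam_def)
  have ei: "i = 2*(i div 2) + i mod 2" and ej: "j = 2*(j div 2) + j mod 2" by auto
  have "f (i+1) (j+1) = f (2*(i div 2) + i mod 2 + 1) (2*(j div 2) + j mod 2 + 1)" using ei ej by simp
  also have "\<dots> = (if i div 2 = j div 2 then E (i mod 2) (j mod 2) else if i div 2 < j div 2 then l^(j div 2 - i div 2 - 1) * B (i mod 2) (j mod 2) else 0)"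
    by (rule assms, insert i' j', auto)
  finally show "mat1 N f $$ (i,j) = upfam N E B l $$ (i,j)" using i' j'
    by (simp add: mat1_def upfam_def)
qed (auto simp: mat1_def upfam_def)

definition Ehcl_l :: "complex \<Rightarrow> nat \<Rightarrow> nat \<Rightarrow> complex" where
  "Ehcl_l u r c = (if r = 0 then 0 else if c = 0 then - s_par u else 1)"
definition Bhcl_l :: "complex \<Rightarrow> nat \<Rightarrow> nat \<Rightarrow> complex" where
  "Bhcl_l u r c = (if r = 0 then (if c = 0 then 1 else - s_par u) else 0)"

definition Ehcl_r :: "complex \<Rightarrow> nat \<Rightarrow> nat \<Rightarrow> complex" where
  "Ehcl_r u r c = (if r = 0 then (if c = 0 then 1 else 0) else if c = 0 then s_par u else 0)"
definition Bhcl_r :: "complex \<Rightarrow> nat \<Rightarrow> nat \<Rightarrow> complex" where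
  "Bhcl_r u r c = (if c = 0 then 0 else if r = 0 then s_par u else 1)"

lemma hcl_r_fam: "hcl_r N u = lowfam N (Ehcl_r u) (Bhcl_r u) 0"
  unfolding hcl_r_def
proof (rule mat1_lowfam)
  fix I J r c :: nat assume "I < N" "J < N" "r < 2" "c < 2"
  hence rc: "r = 0 \<or> r = 1" "c = 0 \<or> c = 1" by auto
  consider "I = J" | "J < I" | "I < J" by linarith
  thus "(if 2*I+r+1 = 2*J+c+1 \<and> odd (2*I+r+1) then 1
     else if 2*I+r+1 = 2*J+c+1 + 1 then s_par u else if 2*I+r+1 = 2*J+c+1 + 2 \<and> even (2*J+c+1) then 1 else 0) =
    (if I = J then Ehcl_r u r c else if J < I then 0^(I-J-1) * Bhcl_r u r c else 0)"
  proof cases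
    case 1 thus ?thesis using rc apply (elim disjE) apply (simp_all add: Ehcl_r_def) done
  next
    case 2 then obtain d where I: "I = Suc (J + d)" using less_imp_Suc_add by blast
    show ?thesis using rc unfolding I apply (elim disjE) apply (cases d, simp_all add: Bhcl_r_def)+ done
  next
    case 3 then obtain d where J: "J = Suc (I + d)" using less_imp_Suc_add by blast
    show ?thesis using rc unfolding J apply (elim disjE) apply (simp_all) done
  qed
qed

definition Ehq_l :: "complex \<Rightarrow> nat \<Rightarrow> nat \<Rightarrow> complex" where
  "Ehq_l u r c = (if r = 0 then (if c = 0 then 0 else s_par u) else if c = 0 then 0 else 1)"
definition Bhq_l :: "complex \<Rightarrow> nat \<Rightarrow> nat \<Rightarrow> complex" where
  "Bhq_l u r c = (if c = 1 then 0 else if r = 0 then 1 else s_par u)"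

lemma hq_l_fam: "hq_l N u = upfam N (Ehq_l u) (Bhq_l u) 0"
  unfolding hq_l_def
proof (rule mat1_upfam)
  fix I J r c :: nat assume "I < N" "J < N" "r < 2" "c < 2"
  hence rc: "r = 0 \<or> r = 1" "c = 0 \<or> c = 1" by auto
  consider "I = J" | "J < I" | "I < J" by linarith
  thus "(if 2*I+r+1 = 2*J+c+1 \<and> even (2*I+r+1) then 1
     else if 2*J+c+1 = 2*I+r+1 + 1 then s_par u else if 2*J+c+1 = 2*I+r+1 + 2 \<and> odd (2*I+r+1) then 1 else 0) =
    (if I = J then Ehq_l u r c else if I < J then 0^(J-I-1) * Bhq_l u r c else 0)"
  proof cases
    case 1 thus ?thesis using rc apply (elim disjE) apply (simp_all add: Ehq_l_def) done
  next
    case 3 then obtain d where J: "J = Suc (I + d)" using less_imp_Suc_add by blast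
    show ?thesis using rc unfolding J apply (elim disjE) apply (cases d, simp_all add: Bhq_l_def)+ done
  next
    case 2 then obtain d where I: "I = Suc (J + d)" using less_imp_Suc_add by blast
    show ?thesis using rc unfolding I apply (elim disjE) apply (simp_all) done
  qed
qed

definition Ehq_r :: "complex \<Rightarrow> nat \<Rightarrow> nat \<Rightarrow> complex" where
  "Ehq_r u r c = (if r = 0 then (if c = 0 then 1 else - s_par u) else 0)"
definition Bhq_r :: "complex \<Rightarrow> nat \<Rightarrow> nat \<Rightarrow> complex" where
  "Bhq_r u r c = (if r = 0 then 0 else if c = 0 then - s_par u else 1)"

lemma hq_r_fam: "hq_r N u = upfam N (Ehq_r u) (Bhq_r u) 0"
  unfolding hq_r_def
proof (rule mat1_upfam)
  fix I J r c :: nat assume "I < N" "J < N" "r < 2" "c < 2"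
  hence rc: "r = 0 \<or> r = 1" "c = 0 \<or> c = 1" by auto
  consider "I = J" | "J < I" | "I < J" by linarith
  thus "(if 2*I+r+1 = 2*J+c+1 \<and> odd (2*I+r+1) then 1
     else if 2*J+c+1 = 2*I+r+1 + 1 then - s_par u else if 2*J+c+1 = 2*I+r+1 + 2 \<and> even (2*I+r+1) then 1 else 0) =
    (if I = J then Ehq_r u r c else if I < J then 0^(J-I-1) * Bhq_r u r c else 0)"
  proof cases
    case 1 thus ?thesis using rc apply (elim disjE) apply (simp_all add: Ehq_r_def) done
  next
    case 3 then obtain d where J: "J = Suc (I + d)" using less_imp_Suc_add by blast
    show ?thesis using rc unfolding J apply (elim disjE) apply (cases d, simp_all add: Bhq_r_def)+ done
  next
    case 2 then obtain d where I: "I = Suc (J + d)" using less_imp_Suc_add by blast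
    show ?thesis using rc unfolding I apply (elim disjE) apply (simp_all) done
  qed
qed

lemma hcl_l_fam: "hcl_l N u = lowfam N (Ehcl_l u) (Bhcl_l u) 0"
  unfolding hcl_l_def
proof (rule mat1_lowfam)
  fix I J r c :: nat assume "I < N" "J < N" "r < 2" "c < 2"
  hence rc: "r = 0 \<or> r = 1" "c = 0 \<or> c = 1" by auto
  consider "I = J" | "J < I" | "I < J" by linarith
  thus "(if 2*I+r+1 = 2*J+c+1 \<and> even (2*I+r+1) then 1
     else if 2*I+r+1 = 2*J+c+1 + 1 then - s_par u else if 2*I+r+1 = 2*J+c+1 + 2 \<and> odd (2*J+c+1) then 1 else 0) =
    (if I = J then Ehcl_l u r c else if J < I then 0^(I-J-1) * Bhcl_l u r c else 0)"
  proof cases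
    case 1 thus ?thesis using rc apply (elim disjE) apply (simp_all add: Ehcl_l_def) done
  next
    case 2 then obtain d where I: "I = Suc (J + d)" using less_imp_Suc_add by blast
    show ?thesis using rc unfolding I apply (elim disjE) apply (cases d, simp_all add: Bhcl_l_def)+ done
  next
    case 3 then obtain d where J: "J = Suc (I + d)" using less_imp_Suc_add by blast
    show ?thesis using rc unfolding J apply (elim disjE) apply (simp_all) done
  qed
qed

definition c1cl :: "complex \<Rightarrow> complex \<Rightarrow> complex" where
  "c1cl u v = - \<i> / (cosh v * sinh (u - v))"

definition EMcl :: "complex \<Rightarrow> complex \<Rightarrow> nat \<Rightarrow> nat \<Rightarrow> complex" where
  "EMcl u v r c = (if r = 0 then (if c = 0 then - \<i> * coth (u - v) else 0)
                  else (if c = 0 then c1cl u v else \<i> * tanh v))"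
definition BMcl :: "complex \<Rightarrow> complex \<Rightarrow> nat \<Rightarrow> nat \<Rightarrow> complex" where
  "BMcl u v r c = (if r = 0 then (if c = 0 then - \<i> / (coth v * sinh (u - v) ^ 2) else c1cl u v)
                  else (if c = 0 then lam_cl u v * c1cl u v else - \<i> / (tanh (u - v) * cosh v ^ 2)))"

lemma ME1: "b < a \<Longrightarrow> a - b = 2*k \<Longrightarrow> odd b \<Longrightarrow>
  Mcl_entry u v a b = - \<i> * lam_cl u v ^ (k - 1) / (coth v * sinh (u - v) ^ 2)"
  unfolding Mcl_entry_def Let_def by auto
lemma ME2: "b < a \<Longrightarrow> a - b = 2*k \<Longrightarrow> even b \<Longrightarrow>
  Mcl_entry u v a b = - \<i> * lam_cl u v ^ (k - 1) / (tanh (u - v) * cosh v ^ 2)"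
  unfolding Mcl_entry_def Let_def by auto
lemma ME3: "b < a \<Longrightarrow> a - b + 1 = 2*k \<Longrightarrow>
  Mcl_entry u v a b = - \<i> * lam_cl u v ^ (k - 1) / (cosh v * sinh (u - v))"
proof -
  assume "b < a" "a - b + 1 = 2*k"
  moreover have "odd (a - b)" using calculation by presburger
  ultimately show ?thesis unfolding Mcl_entry_def Let_def by auto
qed

lemma Mcl_fam: "Mcl N u v = lowfam N (EMcl u v) (BMcl u v) (lam_cl u v)"
  unfolding Mcl_def
proof (rule mat1_lowfam)
  fix I J r c :: nat assume "I < N" "J < N" "r < 2" "c < 2"
  hence rc: "r = 0 \<or> r = 1" "c = 0 \<or> c = 1" by auto
  consider "I = J" | "J < I" | "I < J" by linarith
  thus "Mcl_entry u v (2*I+r+1) (2*J+c+1) =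
    (if I = J then EMcl u v r c else if J < I then lam_cl u v^(I-J-1) * BMcl u v r c else 0)"
  proof cases
    case 1 thus ?thesis using rc apply (elim disjE) apply (simp_all add: EMcl_def Mcl_entry_def c1cl_def) done
  next
    case 2 then obtain d where I: "I = Suc (J + d)" using less_imp_Suc_add by blast
    let ?l = "lam_cl u v"
    have rhs: "(if I = J then EMcl u v r c else if J < I then ?l^(I-J-1) * BMcl u v r c else 0)
      = ?l^d * BMcl u v r c" unfolding I by simp
    show ?thesis using rc(1)
    proof (elim disjE)
      assume r: "r = 0"
      show ?thesis using rc(2)
      proof (elim disjE)
        assume c: "c = 0"
        have "Mcl_entry u v (2*I+r+1) (2*J+c+1) = - \<i> * ?l ^ (Suc d - 1) / (coth v * sinh (u - v) ^ 2)"
          by (rule ME1, unfold I r c, auto)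
        thus ?thesis by (simp add: BMcl_def r c I)
      next
        assume c: "c = 1"
        have "Mcl_entry u v (2*I+r+1) (2*J+c+1) = - \<i> * ?l ^ (Suc d - 1) / (cosh v * sinh (u - v))"
          by (rule ME3, unfold I r c, auto)
        thus ?thesis by (simp add: BMcl_def c1cl_def r c I)
      qed
    next
      assume r: "r = 1"
      show ?thesis using rc(2)
      proof (elim disjE)
        assume c: "c = 0"
        have "Mcl_entry u v (2*I+r+1) (2*J+c+1) = - \<i> * ?l ^ (Suc (Suc d) - 1) / (cosh v * sinh (u - v))"
          by (rule ME3, unfold I r c, auto)
        thus ?thesis by (simp add: BMcl_def c1cl_def r c I)
      next
        assume c: "c = 1"
        have "Mcl_entry u v (2*I+r+1) (2*J+c+1) = - \<i> * ?l ^ (Suc d - 1) / (tanh (u - v) * cosh v ^ 2)"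
          by (rule ME2, unfold I r c, auto)
        thus ?thesis by (simp add: BMcl_def r c I)
      qed
    qed
  next
    case 3 then obtain d where J: "J = Suc (I + d)" using less_imp_Suc_add by blast
    show ?thesis using rc unfolding J apply (elim disjE) apply (simp_all add: Mcl_entry_def) done
  qed
qed

definition c1q :: "complex \<Rightarrow> complex \<Rightarrow> complex" where
  "c1q u v = \<i> / (sinh v * cosh (u - v))"

definition EMq :: "complex \<Rightarrow> complex \<Rightarrow> nat \<Rightarrow> nat \<Rightarrow> complex" where
  "EMq u v r c = (if r = 0 then (if c = 0 then - \<i> * tanh (u - v) else c1q u v)
                  else (if c = 0 then 0 else \<i> * coth v))"
definition BMq :: "complex \<Rightarrow> complex \<Rightarrow> nat \<Rightarrow> nat \<Rightarrow> complex" where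
  "BMq u v r c = (if r = 0 then (if c = 0 then \<i> / (tanh v * cosh (u - v) ^ 2) else lam_q u v * c1q u v)
                  else (if c = 0 then c1q u v else \<i> / (coth (u - v) * sinh v ^ 2)))"

lemma MQ1: "a < b \<Longrightarrow> b - a = 2*k \<Longrightarrow> odd a \<Longrightarrow>
  Mq_entry u v a b = \<i> * lam_q u v ^ (k - 1) / (tanh v * cosh (u - v) ^ 2)"
  unfolding Mq_entry_def Let_def by auto
lemma MQ2: "a < b \<Longrightarrow> b - a = 2*k \<Longrightarrow> even a \<Longrightarrow>
  Mq_entry u v a b = \<i> * lam_q u v ^ (k - 1) / (coth (u - v) * sinh v ^ 2)"
  unfolding Mq_entry_def Let_def by auto
lemma MQ3: "a < b \<Longrightarrow> b - a + 1 = 2*k \<Longrightarrow>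
  Mq_entry u v a b = \<i> * lam_q u v ^ (k - 1) / (sinh v * cosh (u - v))"
proof -
  assume "a < b" "b - a + 1 = 2*k"
  moreover have "odd (b - a)" using calculation by presburger
  ultimately show ?thesis unfolding Mq_entry_def Let_def by auto
qed

lemma Mq_fam: "Mq N u v = upfam N (EMq u v) (BMq u v) (lam_q u v)"
  unfolding Mq_def
proof (rule mat1_upfam)
  fix I J r c :: nat assume "I < N" "J < N" "r < 2" "c < 2"
  hence rc: "r = 0 \<or> r = 1" "c = 0 \<or> c = 1" by auto
  consider "I = J" | "J < I" | "I < J" by linarith
  thus "Mq_entry u v (2*I+r+1) (2*J+c+1) =
    (if I = J then EMq u v r c else if I < J then lam_q u v^(J-I-1) * BMq u v r c else 0)"
  proof cases
    case 1 thus ?thesis using rc apply (elim disjE) apply (simp_all add: EMq_def Mq_entry_def c1q_def) done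
  next
    case 3 then obtain d where J: "J = Suc (I + d)" using less_imp_Suc_add by blast
    let ?l = "lam_q u v"
    show ?thesis using rc(1)
    proof (elim disjE)
      assume r: "r = 0"
      show ?thesis using rc(2)
      proof (elim disjE)
        assume c: "c = 0"
        have "Mq_entry u v (2*I+r+1) (2*J+c+1) = \<i> * ?l ^ (Suc d - 1) / (tanh v * cosh (u - v) ^ 2)"
          by (rule MQ1, unfold J r c, auto)
        thus ?thesis by (simp add: BMq_def r c J)
      next
        assume c: "c = 1"
        have "Mq_entry u v (2*I+r+1) (2*J+c+1) = \<i> * ?l ^ (Suc (Suc d) - 1) / (sinh v * cosh (u - v))"
          by (rule MQ3, unfold J r c, auto)
        thus ?thesis by (simp add: BMq_def c1q_def r c J)
      qed
    next
      assume r: "r = 1"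
      show ?thesis using rc(2)
      proof (elim disjE)
        assume c: "c = 0"
        have "Mq_entry u v (2*I+r+1) (2*J+c+1) = \<i> * ?l ^ (Suc d - 1) / (sinh v * cosh (u - v))"
          by (rule MQ3, unfold J r c, auto)
        thus ?thesis by (simp add: BMq_def c1q_def r c J)
      next
        assume c: "c = 1"
        have "Mq_entry u v (2*I+r+1) (2*J+c+1) = \<i> * ?l ^ (Suc d - 1) / (coth (u - v) * sinh v ^ 2)"
          by (rule MQ2, unfold J r c, auto)
        thus ?thesis by (simp add: BMq_def r c J)
      qed
    qed
  next
    case 2 then obtain d where I: "I = Suc (J + d)" using less_imp_Suc_add by blast
    show ?thesis using rc unfolding I apply (elim disjE) apply (simp_all add: Mq_entry_def) done
  qed
qed

lemma abs_cl1:
  fixes sv cv sw cw :: complex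
  assumes nz: "sv \<noteq> 0" "cv \<noteq> 0" "sw \<noteq> 0" "cw \<noteq> 0" and id: "cv^2 = sv^2 + 1" "cw^2 = sw^2 + 1"
  shows "(- \<i> / (cv * sw)) * (- \<i> / (cv * sw)) - (\<i> * (sv/cv) - (- \<i> * (cw/sw))) * (- \<i> / ((cv/sv) * sw^2))
     = - (sw * cv + cw * sv) / (cv * sw^3)"
  apply (simp add: field_simps nz)
  using id by (Groebner_Basis.algebra)

lemma abs_cl2:
  fixes sv cv sw cw :: complex
  assumes nz: "sv \<noteq> 0" "cv \<noteq> 0" "sw \<noteq> 0" "cw \<noteq> 0" and id: "cv^2 = sv^2 + 1" "cw^2 = sw^2 + 1"
  shows "(- \<i> * (cw/sw) - \<i> * (sv/cv)) * (- \<i> / ((sw/cw) * cv^2)) - (- \<i> / (cv * sw)) * (- \<i> / (cv * sw))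
     = - (sw * cv + cw * sv) / (cv^3 * sw)"
  apply (simp add: field_simps nz)
  using id by (Groebner_Basis.algebra)

lemma abs_q1:
  fixes sv cv sw cw :: complex
  assumes nz: "sv \<noteq> 0" "cv \<noteq> 0" "sw \<noteq> 0" "cw \<noteq> 0" and id: "cv^2 = sv^2 + 1" "cw^2 = sw^2 + 1"
  shows "(\<i> * (cv/sv) - (- \<i> * (sw/cw))) * (\<i> / ((sv/cv) * cw^2)) - (\<i> / (sv * cw)) * (\<i> / (sv * cw))
     = - (sw * cv + cw * sv) / (sv * cw^3)"
  apply (simp add: field_simps nz)
  using id by (Groebner_Basis.algebra)

lemma abs_q2:
  fixes sv cv sw cw :: complex
  assumes nz: "sv \<noteq> 0" "cv \<noteq> 0" "sw \<noteq> 0" "cw \<noteq> 0" and id: "cv^2 = sv^2 + 1" "cw^2 = sw^2 + 1"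
  shows "(- \<i> * (sw/cw) - \<i> * (cv/sv)) * (\<i> / ((cw/sw) * sv^2)) - (\<i> / (sv * cw)) * (\<i> / (sv * cw))
     = (sw * cv + cw * sv) / (sv^3 * cw)"
  apply (simp add: field_simps nz)
  using id by (Groebner_Basis.algebra)

lemma Mcl_conds:
  assumes nz: "sinh v \<noteq> 0" "cosh v \<noteq> 0" "sinh (u-v) \<noteq> 0" "cosh (u-v) \<noteq> 0" "sinh u \<noteq> 0" "cosh u \<noteq> 0"
  shows "EMcl u v 0 0 \<noteq> EMcl u v 1 1"
    "EMcl u v 1 0 * BMcl u v 0 1 - (EMcl u v 1 1 - EMcl u v 0 0) * BMcl u v 0 0 \<noteq> 0"
    "(EMcl u v 0 0 - EMcl u v 1 1) * BMcl u v 1 1 - EMcl u v 1 0 * BMcl u v 0 1 \<noteq> 0"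
proof -
  define w where "w = u - v"
  define sv cv sw cw where "sv = sinh v" "cv = cosh v" "sw = sinh w" "cw = cosh w"
  have u: "u = w + v" by (simp add: w_def)
  have su: "sinh u = sw * cv + cw * sv" unfolding u sinh_add sv_cv_sw_cw_def ..
  have cu: "cosh u = cw * cv + sw * sv" unfolding u cosh_add sv_cv_sw_cw_def by (simp add: mult.commute)
  have nz': "sv \<noteq> 0" "cv \<noteq> 0" "sw \<noteq> 0" "cw \<noteq> 0" using nz unfolding w_def sv_cv_sw_cw_def by auto
  have id: "cv^2 = sv^2 + 1" "cw^2 = sw^2 + 1" unfolding sv_cv_sw_cw_def by (rule cosh_square_eq)+
  have e: "EMcl u v 0 0 = - \<i> * (cw/sw)" "EMcl u v 1 1 = \<i> * (sv/cv)" "EMcl u v 1 0 = - \<i> / (cv * sw)"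
     "BMcl u v 0 0 = - \<i> / ((cv/sv) * sw^2)" "BMcl u v 0 1 = - \<i> / (cv * sw)"
     "BMcl u v 1 1 = - \<i> / ((sw/cw) * cv^2)"
    unfolding EMcl_def BMcl_def c1cl_def tanh_def coth_def sv_cv_sw_cw_def w_def by simp_all
  show "EMcl u v 0 0 \<noteq> EMcl u v 1 1"
  proof
    assume "EMcl u v 0 0 = EMcl u v 1 1"
    hence "- \<i> * (cw/sw) - \<i> * (sv/cv) = 0" unfolding e by simp
    moreover have "- \<i> * (cw/sw) - \<i> * (sv/cv) = - \<i> * (cw * cv + sw * sv) / (sw * cv)"
      using nz' by (simp add: field_simps)
    ultimately show False using nz' nz(6) cu by simp
  qed
  show "EMcl u v 1 0 * BMcl u v 0 1 - (EMcl u v 1 1 - EMcl u v 0 0) * BMcl u v 0 0 \<noteq> 0"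
    unfolding e abs_cl1[OF nz' id] using nz' nz(5) su by (simp add: neg_eq_iff_add_eq_0)
  show "(EMcl u v 0 0 - EMcl u v 1 1) * BMcl u v 1 1 - EMcl u v 1 0 * BMcl u v 0 1 \<noteq> 0"
    unfolding e abs_cl2[OF nz' id] using nz' nz(5) su by (simp add: neg_eq_iff_add_eq_0)
qed

lemma Mq_conds:
  assumes nz: "sinh v \<noteq> 0" "cosh v \<noteq> 0" "sinh (u-v) \<noteq> 0" "cosh (u-v) \<noteq> 0" "sinh u \<noteq> 0" "cosh u \<noteq> 0"
  shows "EMq u v 0 0 \<noteq> EMq u v 1 1"
    "(EMq u v 1 1 - EMq u v 0 0) * BMq u v 0 0 - EMq u v 0 1 * BMq u v 1 0 \<noteq> 0"
    "(EMq u v 0 0 - EMq u v 1 1) * BMq u v 1 1 - EMq u v 0 1 * BMq u v 1 0 \<noteq> 0"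
proof -
  define w where "w = u - v"
  define sv cv sw cw where "sv = sinh v" "cv = cosh v" "sw = sinh w" "cw = cosh w"
  have u: "u = w + v" by (simp add: w_def)
  have su: "sinh u = sw * cv + cw * sv" unfolding u sinh_add sv_cv_sw_cw_def ..
  have cu: "cosh u = cw * cv + sw * sv" unfolding u cosh_add sv_cv_sw_cw_def by (simp add: mult.commute)
  have nz': "sv \<noteq> 0" "cv \<noteq> 0" "sw \<noteq> 0" "cw \<noteq> 0" using nz unfolding w_def sv_cv_sw_cw_def by auto
  have id: "cv^2 = sv^2 + 1" "cw^2 = sw^2 + 1" unfolding sv_cv_sw_cw_def by (rule cosh_square_eq)+
  have e: "EMq u v 0 0 = - \<i> * (sw/cw)" "EMq u v 1 1 = \<i> * (cv/sv)" "EMq u v 0 1 = \<i> / (sv * cw)"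
     "BMq u v 0 0 = \<i> / ((sv/cv) * cw^2)" "BMq u v 1 0 = \<i> / (sv * cw)"
     "BMq u v 1 1 = \<i> / ((cw/sw) * sv^2)"
    unfolding EMq_def BMq_def c1q_def tanh_def coth_def sv_cv_sw_cw_def w_def by simp_all
  show "EMq u v 0 0 \<noteq> EMq u v 1 1"
  proof
    assume "EMq u v 0 0 = EMq u v 1 1"
    hence "- \<i> * (sw/cw) - \<i> * (cv/sv) = 0" unfolding e by simp
    moreover have "- \<i> * (sw/cw) - \<i> * (cv/sv) = - \<i> * (cw * cv + sw * sv) / (cw * sv)"
      using nz' by (simp add: field_simps)
    ultimately show False using nz' nz(6) cu by simp
  qed
  show "(EMq u v 1 1 - EMq u v 0 0) * BMq u v 0 0 - EMq u v 0 1 * BMq u v 1 0 \<noteq> 0"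
    unfolding e abs_q1[OF nz' id] using nz' nz(5) su by (simp add: neg_eq_iff_add_eq_0)
  show "(EMq u v 0 0 - EMq u v 1 1) * BMq u v 1 1 - EMq u v 0 1 * BMq u v 1 0 \<noteq> 0"
    unfolding e abs_q2[OF nz' id] using nz' nz(5) su by (simp add: neg_eq_iff_add_eq_0)
qed

lemma two_blocks_sym: "two_blocks N A d1 d2 \<Longrightarrow> two_blocks N A d2 d1"
  unfolding two_blocks_def using jordan_nf_swap by auto

lemma s_facts:
  assumes "sinh u \<noteq> 0" "cosh u \<noteq> 0"
  shows "s_par u \<noteq> 0" "s_par u * s_par u \<noteq> 1"
proof -
  show "s_par u \<noteq> 0" using assms unfolding s_par_def by simp
  show "s_par u * s_par u \<noteq> 1"
  proof
    assume "s_par u * s_par u = 1"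
    hence "cosh u ^ 2 = 1" using assms unfolding s_par_def by (simp add: field_simps power2_eq_square)
    hence "sinh u ^ 2 = 0" using cosh_square_eq[of u] by simp
    thus False using assms by simp
  qed
qed

lemma sinh_complex_of_real: "sinh (complex_of_real x) = complex_of_real (sinh x)"
  by (simp add: sinh_field_def exp_of_real[symmetric])
lemma cosh_complex_of_real: "cosh (complex_of_real x) = complex_of_real (cosh x)"
  by (simp add: cosh_field_def exp_of_real[symmetric])

lemma all_two_blocks:
  assumes N: "N \<ge> 1"
  and nz: "sinh v \<noteq> 0" "cosh v \<noteq> 0" "sinh (u-v) \<noteq> 0" "cosh (u-v) \<noteq> 0" "sinh u \<noteq> 0" "cosh u \<noteq> 0"
  shows "two_blocks N (hcl_l N u) 0 1 \<and>
              two_blocks N (hcl_r N u) 0 1 \<and>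
              two_blocks N (hq_l N u) 0 1 \<and>
              two_blocks N (hq_r N u) 0 1 \<and>
              two_blocks N (Mcl N u v) (- \<i> * coth (u - v)) (\<i> * tanh v) \<and>
              two_blocks N (Mq N u v) (- \<i> * tanh (u - v)) (\<i> * coth v)"
proof (intro conjI)
  note s = s_facts[OF nz(5,6)]
  have "two_blocks N (lowfam N (Ehcl_l u) (Bhcl_l u) 0) (Ehcl_l u 0 0) (Ehcl_l u 1 1)"
    apply (rule lowfam_two_blocks[OF _ N])
    apply (simp add: Ehcl_l_def)
    apply (simp add: Ehcl_l_def)
    apply (simp add: Ehcl_l_def Bhcl_l_def s)
    apply (simp add: Ehcl_l_def Bhcl_l_def s)
    done
  thus "two_blocks N (hcl_l N u) 0 1" unfolding hcl_l_fam by (simp add: Ehcl_l_def)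
  have "two_blocks N (lowfam N (Ehcl_r u) (Bhcl_r u) 0) (Ehcl_r u 0 0) (Ehcl_r u 1 1)"
    apply (rule lowfam_two_blocks[OF _ N])
    apply (simp add: Ehcl_r_def)
    apply (simp add: Ehcl_r_def)
    apply (simp add: Ehcl_r_def Bhcl_r_def s)
    apply (simp add: Ehcl_r_def Bhcl_r_def s)
    done
  hence "two_blocks N (hcl_r N u) 1 0" unfolding hcl_r_fam by (simp add: Ehcl_r_def)
  thus "two_blocks N (hcl_r N u) 0 1" by (rule two_blocks_sym)
  have "two_blocks N (upfam N (Ehq_l u) (Bhq_l u) 0) (Ehq_l u 0 0) (Ehq_l u 1 1)"
    apply (rule upfam_two_blocks[OF _ N])
    apply (simp add: Ehq_l_def)
    apply (simp add: Ehq_l_def)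
    apply (simp add: Ehq_l_def Bhq_l_def s)
    apply (simp add: Ehq_l_def Bhq_l_def s)
    done
  thus "two_blocks N (hq_l N u) 0 1" unfolding hq_l_fam by (simp add: Ehq_l_def)
  have "two_blocks N (upfam N (Ehq_r u) (Bhq_r u) 0) (Ehq_r u 0 0) (Ehq_r u 1 1)"
    apply (rule upfam_two_blocks[OF _ N])
    apply (simp add: Ehq_r_def)
    apply (simp add: Ehq_r_def)
    apply (simp add: Ehq_r_def Bhq_r_def s)
    apply (simp add: Ehq_r_def Bhq_r_def s)
    done
  hence "two_blocks N (hq_r N u) 1 0" unfolding hq_r_fam by (simp add: Ehq_r_def)
  thus "two_blocks N (hq_r N u) 0 1" by (rule two_blocks_sym)
  note mc = Mcl_conds[OF nz]
  have "EMcl u v 0 1 = 0" by (simp add: EMcl_def)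
  from lowfam_two_blocks[where E="EMcl u v" and B="BMcl u v" and l="lam_cl u v", OF this N mc]
  show "two_blocks N (Mcl N u v) (- \<i> * coth (u - v)) (\<i> * tanh v)" unfolding Mcl_fam by (simp add: EMcl_def)
  note mq = Mq_conds[OF nz]
  have "EMq u v 1 0 = 0" by (simp add: EMq_def)
  from upfam_two_blocks[where E="EMq u v" and B="BMq u v" and l="lam_q u v", OF this N mq]
  show "two_blocks N (Mq N u v) (- \<i> * tanh (u - v)) (\<i> * coth v)" unfolding Mq_fam by (simp add: EMq_def)
qed

lemma fd_sinh: "g field_differentiable (at x) \<Longrightarrow> (\<lambda>z. sinh (g z :: complex)) field_differentiable (at x)"
  unfolding field_differentiable_def using has_field_derivative_sinh by blast
lemma fd_cosh: "g field_differentiable (at x) \<Longrightarrow> (\<lambda>z. cosh (g z :: complex)) field_differentiable (at x)"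
  unfolding field_differentiable_def using has_field_derivative_cosh by blast

theorem mainTheorem2:
  fixes N :: nat
  assumes "N \<ge> 1"
  shows "\<exists>f :: complex \<Rightarrow> complex \<Rightarrow> complex.
           (\<forall>v. (\<lambda>u. f u v) holomorphic_on UNIV) \<and>
           (\<forall>u. (\<lambda>v. f u v) holomorphic_on UNIV) \<and>
           (\<exists>u v. f u v \<noteq> 0) \<and>
           (\<forall>u v. f u v \<noteq> 0 \<longrightarrow>
              two_blocks N (hcl_l N u) 0 1 \<and>
              two_blocks N (hcl_r N u) 0 1 \<and>
              two_blocks N (hq_l N u) 0 1 \<and>
              two_blocks N (hq_r N u) 0 1 \<and>
              two_blocks N (Mcl N u v) (- \<i> * coth (u - v)) (\<i> * tanh v) \<and>
              two_blocks N (Mq N u v) (- \<i> * tanh (u - v)) (\<i> * coth v))"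
proof (intro exI conjI allI impI)
  define f :: "complex \<Rightarrow> complex \<Rightarrow> complex" where
    "f = (\<lambda>u v. sinh u * cosh u * sinh v * cosh v * sinh (u - v) * cosh (u - v))"
  show "(\<lambda>u. f u v) holomorphic_on UNIV" for v
  proof (rule holomorphic_onI)
    fix x :: complex
    have "(\<lambda>u. f u v) field_differentiable (at x)" unfolding f_def
      by (intro field_differentiable_mult fd_sinh fd_cosh field_differentiable_diff field_differentiable_ident field_differentiable_const)
    thus "(\<lambda>u. f u v) field_differentiable (at x within UNIV)" by simp
  qed
  show "(\<lambda>v. f u v) holomorphic_on UNIV" for u
  proof (rule holomorphic_onI)
    fix x :: complex
    have "(\<lambda>v. f u v) field_differentiable (at x)" unfolding f_def
      by (intro field_differentiable_mult fd_sinh fd_cosh field_differentiable_diff field_differentiable_ident field_differentiable_const)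
    thus "(\<lambda>v. f u v) field_differentiable (at x within UNIV)" by simp
  qed
  show "f 2 1 \<noteq> 0"
  proof -
    have a: "sinh (2::complex) = of_real (sinh 2)" "cosh (2::complex) = of_real (cosh 2)"
      "sinh (1::complex) = of_real (sinh 1)" "cosh (1::complex) = of_real (cosh 1)"
      using sinh_complex_of_real[of 2] cosh_complex_of_real[of 2] sinh_complex_of_real[of 1]
        cosh_complex_of_real[of 1] by simp_all
    have b: "(2::complex) - 1 = 1" by simp
    show ?thesis unfolding f_def b a by simp
  qed
  fix u v assume "f u v \<noteq> 0"
  hence nz: "sinh v \<noteq> 0" "cosh v \<noteq> 0" "sinh (u-v) \<noteq> 0" "cosh (u-v) \<noteq> 0" "sinh u \<noteq> 0" "cosh u \<noteq> 0"
    unfolding f_def by auto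
  show "two_blocks N (hcl_l N u) 0 1" "two_blocks N (hcl_r N u) 0 1" "two_blocks N (hq_l N u) 0 1"
    "two_blocks N (hq_r N u) 0 1" "two_blocks N (Mcl N u v) (- \<i> * coth (u - v)) (\<i> * tanh v)"
    "two_blocks N (Mq N u v) (- \<i> * tanh (u - v)) (\<i> * coth v)"
    using all_two_blocks[OF assms nz] by auto
qed

end
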